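(* Let $f\colon[0,1]\to[0,1]$ be a unary aggregation function, let $D(f)=\{c\in\,]0,1[\,:\ \bigvee_{x<c}f(x)<f(c)\}$, and for $a\in\,]0,1[$ let $h^f_a(x)=G^1_{f(a)}(x)\wedge\chi_a(x)$. Then for all $x\in[0,1]$, $$f(x)=\bigvee_{q\in\mathbb{Q}\cap]0,1[}h^f_q(x)\ \vee\ \bigvee_{c\in D(f)}h^f_c(x).$$
   Context: A unary aggregation function on $[0,1]$ is a nondecreasing function $f\colon[0,1]\to[0,1]$ with $f(0)=0$, $f(1)=1$. For $a\in[0,1]$, $\chi_a(x)=1$ if $x\ge a$ and $x\neq0$, and $\chi_a(x)=0$ otherwise. For $b\in[0,1]$, $G^1_b(x)=\mathsf{Med}_b(\chi_0(x),\chi_1(x))$, where $\mathsf{Med}_b(x,y)$ is the median of $x,y,b$ (so $G^1_b(0)=0$, $G^1_b(1)=1$, $G^1_b(x)=b$ for $x\in\,]0,1[$). The supremum over the empty set is $0$. *)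

theory Defs
  imports Complex_Main
begin

definition aggr1 :: "(real \<Rightarrow> real) \<Rightarrow> bool" where
  "aggr1 f \<longleftrightarrow> mono_on {0..1} f \<and> f ` {0..1} \<subseteq> {0..1} \<and> f 0 = 0 \<and> f 1 = 1"

definition sup0 :: "real set \<Rightarrow> real" where
  "sup0 S = (if S = {} then 0 else Sup S)"

definition chi :: "real \<Rightarrow> real \<Rightarrow> real" where
  "chi a x = (if x \<ge> a \<and> x \<noteq> 0 then 1 else 0)"

definition Med :: "real \<Rightarrow> real \<Rightarrow> real \<Rightarrow> real" where
  "Med b x y = max (min x y) (min (max x y) b)"

definition G1 :: "real \<Rightarrow> real \<Rightarrow> real" where
  "G1 b x = Med b (chi 0 x) (chi 1 x)"

definition hf :: "(real \<Rightarrow> real) \<Rightarrow> real \<Rightarrow> real \<Rightarrow> real" where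
  "hf f a x = min (G1 (f a) x) (chi a x)"

definition Dset :: "(real \<Rightarrow> real) \<Rightarrow> real set" where
  "Dset f = {c. 0 < c \<and> c < 1 \<and> sup0 (f ` {x. 0 \<le> x \<and> x < c}) < f c}"

end

theory Submission
  imports Defs
begin

lemma hf_mid:
  assumes "0 < a" "a < 1" "0 < x" "x < 1" "0 \<le> f a" "f a \<le> 1"
  shows "hf f a x = (if a \<le> x then f a else 0)"
  using assms by (auto simp: hf_def G1_def Med_def chi_def)

lemma hf_0: assumes "0 \<le> f a" shows "hf f a 0 = 0"
  using assms by (auto simp: hf_def G1_def Med_def chi_def)

lemma hf_1: assumes "0 < a" "a \<le> 1" shows "hf f a 1 = 1"
  using assms by (auto simp: hf_def G1_def Med_def chi_def)

theorem lemma5: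
  fixes f :: "real \<Rightarrow> real"
  assumes "aggr1 f"
  shows "\<forall>x\<in>{0..1}. f x =
           max (sup0 {hf f q x | q. q \<in> \<rat> \<and> 0 < q \<and> q < 1})
               (sup0 {hf f c x | c. c \<in> Dset f})"
proof
  fix x :: real assume x: "x \<in> {0..1}"
  have mono: "mono_on {0..1} f" and im: "f ` {0..1} \<subseteq> {0..1}"
    and f0: "f 0 = 0" and f1: "f 1 = 1" using assms by (auto simp: aggr1_def)
  have rng: "\<And>y. y \<in> {0..1} \<Longrightarrow> 0 \<le> f y \<and> f y \<le> 1"
  proof -
    fix y :: real assume "y \<in> {0..1}"
    hence "f y \<in> {0..1}" using im by blast
    thus "0 \<le> f y \<and> f y \<le> 1" by simp
  qed
  have fmono: "\<And>a b. 0 \<le> a \<Longrightarrow> a \<le> b \<Longrightarrow> b \<le> 1 \<Longrightarrow> f a \<le> f b"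
    using mono by (auto simp: mono_on_def)
  define A where "A = {hf f q x | q. q \<in> \<rat> \<and> 0 < q \<and> q < 1}"
  define B where "B = {hf f c x | c. c \<in> Dset f}"
  have half: "(1/2::real) \<in> \<rat>" by simp
  have Ane: "A \<noteq> {}" proof -
    have "hf f (1/2) x \<in> A" unfolding A_def using half by (intro CollectI exI[of _ "1/2"]) simp
    thus ?thesis by blast
  qed
  show "f x = max (sup0 A) (sup0 B)"
  proof (cases "x = 0")
    case True
    have "A \<subseteq> {0}" "B \<subseteq> {0}" unfolding A_def B_def Dset_def using True hf_0 rng
      by fastforce+
    hence "A = {0}" "B = {} \<or> B = {0}" using Ane by auto
    thus ?thesis using True f0 by (auto simp: sup0_def)
  next
    case x0: False
    show ?thesis
    proof (cases "x = 1")
      case True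
      have "A \<subseteq> {1}" "B \<subseteq> {1}" unfolding A_def B_def Dset_def using True hf_1
        by fastforce+
      hence "A = {1}" "B = {} \<or> B = {1}" using Ane by auto
      thus ?thesis using True f1 by (auto simp: sup0_def)
    next
      case x1: False
      have xx: "0 < x" "x < 1" using x x0 x1 by auto
      have Aval: "\<And>q. 0 < q \<Longrightarrow> q < 1 \<Longrightarrow> hf f q x = (if q \<le> x then f q else 0)"
        using hf_mid xx rng by auto
      have Abnd: "\<And>a. a \<in> A \<Longrightarrow> 0 \<le> a \<and> a \<le> f x"
        unfolding A_def using Aval fmono rng xx by fastforce
      have Bbnd: "\<And>a. a \<in> B \<Longrightarrow> 0 \<le> a \<and> a \<le> f x"
        unfolding B_def Dset_def using Aval fmono rng xx by fastforce
      have bA: "bdd_above A" by (rule bdd_aboveI[of _ "f x"]) (use Abnd in blast)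
      have bB: "bdd_above B" by (rule bdd_aboveI[of _ "f x"]) (use Bbnd in blast)
      have SA: "sup0 A = Sup A" using Ane by (simp add: sup0_def)
      have SA0: "0 \<le> Sup A"
        using Ane Abnd bA by (meson all_not_in_conv cSup_upper order_trans)
      have le1: "sup0 A \<le> f x" unfolding SA using Ane Abnd by (meson cSup_least)
      have le2: "sup0 B \<le> f x" unfolding sup0_def
        using Bbnd rng xx by (auto intro!: cSup_least)
      have ge: "f x \<le> max (sup0 A) (sup0 B)"
      proof (cases "x \<in> Dset f")
        case True
        have "f x \<in> B" unfolding B_def using True Aval xx by force
        hence "f x \<le> Sup B" using bB by (rule cSup_upper)
        moreover have "B \<noteq> {}" using \<open>f x \<in> B\<close> by auto
        ultimately show ?thesis by (simp add: sup0_def)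
      next
        case False
        define S where "S = f ` {y. 0 \<le> y \<and> y < x}"
        have Sne: "S \<noteq> {}" unfolding S_def using xx by auto
        have "\<not> sup0 S < f x" using False xx unfolding Dset_def S_def by auto
        hence "f x \<le> Sup S" using Sne by (simp add: sup0_def)
        also have "Sup S \<le> Sup A"
        proof (rule cSup_least[OF Sne])
          fix s assume "s \<in> S"
          then obtain y where y: "0 \<le> y" "y < x" "s = f y" unfolding S_def by auto
          show "s \<le> Sup A"
          proof (cases "y = 0")
            case True thus ?thesis using y f0 SA0 by simp
          next
            case False
            obtain q where q: "q \<in> \<rat>" "y < q" "q < x" using Rats_dense_in_real y by blast
            have "f q \<in> A" unfolding A_def using q y xx Aval False
              by (intro CollectI exI[of _ q]) auto
            hence "f q \<le> Sup A" using bA by (rule cSup_upper)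
            moreover have "f y \<le> f q" using fmono q y xx by auto
            ultimately show ?thesis using y by simp
          qed
        qed
        finally show ?thesis using SA by simp
      qed
      show ?thesis using le1 le2 ge by simp
    qed
  qed
qed

end
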